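(* Let $G$ be a graph and let $v, w, x$ be vertices of $G$ such that $v$ is adjacent only to $w$, and $w$ is adjacent only to $v$ and $x$. If $F$ is a minimal fort of $G$ with $v, w \in F$, then $F \setminus \{v, w, x\}$ is a minimal fort of $G - \{v, w, x\}$.
   Context: A fort of a graph $G$ is a nonempty set $F\subseteq V(G)$ such that every vertex outside $F$ is adjacent to either zero or at least two vertices of $F$; it is minimal if no proper subset is a fort. *)

theory Defs
  imports Main
begin

definition graph :: "'a set \<Rightarrow> ('a \<Rightarrow> 'a \<Rightarrow> bool) \<Rightarrow> bool" where
  "graph V E \<longleftrightarrow> finite V \<and> (\<forall>u w. E u w \<longrightarrow> u \<in> V \<and> w \<in> V)
     \<and> (\<forall>u w. E u w \<longrightarrow> E w u) \<and> (\<forall>u. \<not> E u u)"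

definition neighbors :: "'a set \<Rightarrow> ('a \<Rightarrow> 'a \<Rightarrow> bool) \<Rightarrow> 'a \<Rightarrow> 'a set" where
  "neighbors V E u = {w \<in> V. E u w}"

definition fort :: "'a set \<Rightarrow> ('a \<Rightarrow> 'a \<Rightarrow> bool) \<Rightarrow> 'a set \<Rightarrow> bool" where
  "fort V E F \<longleftrightarrow> F \<noteq> {} \<and> F \<subseteq> V \<and>
     (\<forall>u \<in> V - F. card (neighbors V E u \<inter> F) = 0 \<or> card (neighbors V E u \<inter> F) \<ge> 2)"

definition minimal_fort :: "'a set \<Rightarrow> ('a \<Rightarrow> 'a \<Rightarrow> bool) \<Rightarrow> 'a set \<Rightarrow> bool" where
  "minimal_fort V E F \<longleftrightarrow> fort V E F \<and> (\<forall>F'. F' \<subset> F \<longrightarrow> \<not> fort V E F')"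

definition del_verts_V :: "'a set \<Rightarrow> 'a set \<Rightarrow> 'a set" where
  "del_verts_V V S = V - S"

definition del_verts_E :: "('a \<Rightarrow> 'a \<Rightarrow> bool) \<Rightarrow> 'a set \<Rightarrow> 'a \<Rightarrow> 'a \<Rightarrow> bool" where
  "del_verts_E E S = (\<lambda>u w. E u w \<and> u \<notin> S \<and> w \<notin> S)"

end

theory Submission
  imports Defs
begin

lemma single_iff: "(card S = 0 \<or> card S \<ge> 2) \<longleftrightarrow> \<not> (\<exists>a. S = {a})"
  by (metis card_1_singleton_iff not_less_eq_eq numeral_2_eq_2 le_zero_eq le_SucE)

lemma fort_alt: "fort V E F \<longleftrightarrow> F \<noteq> {} \<and> F \<subseteq> V \<and>
     (\<forall>u \<in> V - F. \<not> (\<exists>a. neighbors V E u \<inter> F = {a}))"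
  unfolding fort_def single_iff by (rule refl)

theorem mainTheorem11:
  fixes V :: "'a set" and E :: "'a \<Rightarrow> 'a \<Rightarrow> bool" and v w x :: 'a and F :: "'a set"
  assumes "graph V E"
    and "v \<in> V" and "w \<in> V" and "x \<in> V" and "x \<noteq> v"
    and "neighbors V E v = {w}"
    and "neighbors V E w = {v, x}"
    and "minimal_fort V E F" and "v \<in> F" and "w \<in> F"
  shows "minimal_fort (del_verts_V V {v, w, x}) (del_verts_E E {v, w, x}) (F - {v, w, x})"
proof -
  note g = assms(1)[unfolded graph_def]
  have Ev: "E u v \<Longrightarrow> u = w" for u
    using assms(6) g unfolding neighbors_def by blast
  have Ew: "E u w \<Longrightarrow> u = v \<or> u = x" for u
    using assms(7) g unfolding neighbors_def by blast
  have Ewx: "E x w" "E w x" using assms(7) g unfolding neighbors_def by blast+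
  have wv: "w \<noteq> v" "w \<noteq> x" using g Ewx assms(6) unfolding neighbors_def by blast+
  have F: "fort V E F" and Fmin: "\<And>F'. F' \<subset> F \<Longrightarrow> \<not> fort V E F'"
    using assms(8) unfolding minimal_fort_def by auto
  note Fa = F[unfolded fort_alt]
  define S where "S = {v, w, x}"
  define V' where "V' = V - S"
  define E' where "E' = del_verts_E E S"
  have nb': "u \<notin> S \<Longrightarrow> neighbors V' E' u = neighbors V E u - S" for u
    unfolding neighbors_def V'_def E'_def del_verts_E_def by auto
  have nbu: "u \<notin> S \<Longrightarrow> v \<notin> neighbors V E u \<and> w \<notin> neighbors V E u" for u
    using Ev Ew g unfolding neighbors_def S_def by blast
  have xF: "x \<notin> F"
  proof
    assume xF: "x \<in> F"
    have "fort V E (F - {w})"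
      unfolding fort_alt
    proof (intro conjI ballI)
      show "F - {w} \<noteq> {}" using assms(9) wv by auto
      show "F - {w} \<subseteq> V" using Fa by auto
      fix u assume u: "u \<in> V - (F - {w})"
      show "\<not> (\<exists>a. neighbors V E u \<inter> (F - {w}) = {a})"
      proof (cases "u = w")
        case True
        then have "neighbors V E u \<inter> (F - {w}) = {v, x}"
          using assms(7,9) xF wv by auto
        show ?thesis
        proof
          assume "\<exists>a. neighbors V E u \<inter> (F - {w}) = {a}"
          then obtain a where "{v, x} = {a}" using \<open>neighbors V E u \<inter> (F - {w}) = {v, x}\<close> by auto
          then have "v = a" "x = a" by (blast, blast)
          then show False using assms(5) by simp
        qed
      next
        case False
        then have "u \<notin> S" using u assms(9) xF unfolding S_def by auto
        then have "neighbors V E u \<inter> (F - {w}) = neighbors V E u \<inter> F"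
          using nbu by blast
        then show ?thesis using Fa u False by auto
      qed
    qed
    then show False using Fmin assms(10) by blast
  qed
  have FS: "F - S = F - {v, w}" using xF unfolding S_def by auto
  have fort': "fort V' E' (F - S)"
    unfolding fort_alt
  proof (intro conjI ballI)
    have "w \<in> neighbors V E x \<inter> F" using Ewx assms(3,10) unfolding neighbors_def by auto
    then obtain y where "y \<in> neighbors V E x \<inter> F" "y \<noteq> w"
    proof -
      have "neighbors V E x \<inter> F \<noteq> {w}" using Fa xF assms(4) by blast
      then show ?thesis using that \<open>w \<in> neighbors V E x \<inter> F\<close> by blast
    qed
    moreover then have "y \<noteq> v" using Ev wv by (auto simp: neighbors_def)
    ultimately show "F - S \<noteq> {}" using FS by auto
    show "F - S \<subseteq> V'" using Fa V'_def by auto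
    fix u assume u: "u \<in> V' - (F - S)"
    then have uS: "u \<notin> S" "u \<in> V - F" using V'_def by auto
    have "neighbors V' E' u \<inter> (F - S) = neighbors V E u \<inter> F"
      using nb' nbu uS FS by auto
    then show "\<not> (\<exists>a. neighbors V' E' u \<inter> (F - S) = {a})" using Fa uS by auto
  qed
  have "\<not> fort V' E' F''" if F'': "F'' \<subset> F - S" for F''
  proof
    assume f'': "fort V' E' F''"
    note fa = f''[unfolded fort_alt]
    have F''S: "F'' \<inter> S = {}" using F'' by auto
    show False
    proof (cases "neighbors V E x \<inter> F'' = {}")
      case True
      have "fort V E F''"
        unfolding fort_alt
      proof (intro conjI ballI)
        show "F'' \<noteq> {}" using fa by auto
        show "F'' \<subseteq> V" using fa V'_def by auto
        fix u assume u: "u \<in> V - F''"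
        show "\<not> (\<exists>a. neighbors V E u \<inter> F'' = {a})"
        proof (cases "u \<in> S")
          case True
          then have "u = v \<or> u = w \<or> u = x" unfolding S_def by auto
          then have "neighbors V E u \<inter> F'' = {}"
            using \<open>neighbors V E x \<inter> F'' = {}\<close> assms(6,7) F''S unfolding S_def by auto
          then show ?thesis by auto
        next
          case False
          then have "neighbors V E u \<inter> F'' = neighbors V' E' u \<inter> F''"
            using nb' F''S by auto
          then show ?thesis using fa u False V'_def by auto
        qed
      qed
      moreover have "F'' \<subset> F" using F'' by auto
      ultimately show False using Fmin by blast
    next
      case False
      define H where "H = F'' \<union> {v, w}"
      have "fort V E H"
        unfolding fort_alt
      proof (intro conjI ballI)
        show "H \<noteq> {}" using H_def by auto
        show "H \<subseteq> V" using fa V'_def H_def assms(2,3) by auto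
        fix u assume u: "u \<in> V - H"
        show "\<not> (\<exists>a. neighbors V E u \<inter> H = {a})"
        proof (cases "u \<in> S")
          case True
          then have "u = x" using u H_def unfolding S_def by auto
          moreover have "w \<in> neighbors V E x \<inter> H" using Ewx assms(3) H_def
            unfolding neighbors_def by auto
          moreover obtain y where "y \<in> neighbors V E x \<inter> F''" using False by auto
          moreover have "y \<noteq> w" using calculation(3) F''S S_def by auto
          moreover have "y \<in> neighbors V E x \<inter> H" using calculation(3) H_def by auto
          ultimately show ?thesis by (metis singletonD)
        next
          case False
          then have "neighbors V E u \<inter> H = neighbors V' E' u \<inter> F''"
            using nb' nbu F''S H_def by auto
          then show ?thesis using fa u False V'_def H_def by auto
        qed
      qed
      moreover have "H \<subset> F"
      proof -
        obtain z where z: "z \<in> F - S" "z \<notin> F''" using F'' by blast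
        have "z \<notin> H" using z H_def unfolding S_def by auto
        moreover have "H \<subseteq> F" using F'' H_def assms(9,10) by auto
        ultimately show ?thesis using z by blast
      qed
      ultimately show False using Fmin by blast
    qed
  qed
  then have "minimal_fort V' E' (F - S)" using fort' unfolding minimal_fort_def by blast
  then show ?thesis unfolding V'_def E'_def S_def del_verts_V_def .
qed

end
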